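(* Let $\mathcal{D}$ be a DCR graph and suppose $\mathbf{1}\triangleright P_0\xrightarrow{\tau}P_1\xrightarrow{\tau}\cdots\xrightarrow{\tau}P_n$ with $P_0=\textsc{dcrpsi}(\mathcal{D})$. Then the generation component (fourth component) of the frame $\mathcal{F}(P_n)$ is $s^n(0)$, i.e. equals $n$.
   Context: A DCR graph is a tuple $(E,M,\to\!\bullet,\bullet\!\to,\to\!\diamond,\to\!+,\to\!\%)$ where $E$ is a set of events (names from a nominal set), $M=(Ex',Re',In')$ is a triple of subsets of $E$ (the marking), and $\to\!\bullet,\bullet\!\to,\to\!\diamond,\to\!+,\to\!\%\subseteq E\times E$ are the condition, response, milestone, include and exclude relations. For a relation $\to$ write $e\!\to=\{f\mid e\to f\}$ and $\to\! e=\{f\mid f\to e\}$. dcrPsi instance: assertions are quadruples $(Ex,Re,In,G)$ with $Ex,Re,In\subseteq E$ and $G$ a natural number built from $0$ and successor $s(\cdot)$ (the generation); terms are a distinguished channel name $m$ and assertions; conditions are triples $(Co,Mi,e)$ with $Co,Mi\subseteq E$, $e\in E$; channel equality is $=$; unit $\mathbf{1}=(\emptyset,\emptyset,\emptyset,0)$; composition: $(Ex,Re,In,G)\otimes(Ex',Re',In',G')$ equals the first argument if $G>G'$, the second if $G<G'$, and $(Ex\cup Ex',Re\cup Re',In\cup In',G)$ if $G=G'$; entailment: $(Ex,Re,In,G)\vdash(Co,Mi,e)$ iff $e\in In$, $In\cap Co\subseteq Ex$ and $In\cap Mi\cap Re=\emptyset$. Psi-calculus: processes $\mathbf{0}$,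 $(\!|\Psi|\!)$, $\overline{M}\langle N\rangle.P$, $\underline{M}(\lambda\tilde x)N.P$, $\mathbf{case}\ \tilde\varphi:\tilde P$, $P\mid Q$, $!P$. Frames: $\mathcal{F}((\!|\Psi|\!))=\Psi$, $\mathcal{F}(P\mid Q)=\mathcal{F}(P)\otimes\mathcal{F}(Q)$, frame of $\mathbf{0}$, prefixed, case and replicated processes is $\mathbf{1}$. Transitions $\Psi\triangleright P\xrightarrow{\alpha}P'$ are generated by: (Out) if $\Psi\vdash M\leftrightarrow K$ then $\Psi\triangleright\overline{M}\langle N\rangle.P\xrightarrow{\overline{K}N}P$; (In) if $\Psi\vdash M\leftrightarrow K$ then $\Psi\triangleright\underline{M}(\lambda\tilde y)N.P\xrightarrow{\underline{K}N[\tilde y:=\tilde L]}P[\tilde y:=\tilde L]$ for any terms $\tilde L$; (Case) if $\Psi\triangleright P_i\xrightarrow{\alpha}P'$ and $\Psi\vdash\varphi_i$ then $\Psi\triangleright\mathbf{case}\ \tilde\varphi:\tilde P\xrightarrow{\alpha}P'$; (Par) if $\Psi\otimes\mathcal{F}(Q)\triangleright P\xrightarrow{\alpha}P'$ then $\Psi\triangleright P\mid Q\xrightarrow{\alpha}P'\mid Q$, and symmetrically; (Rep) if $\Psi\triangleright P\mid !P\xrightarrow{\alpha}P'$ then $\Psi\triangleright !P\xrightarrow{\alpha}P'$; (Com) if $\mathcal{F}(P)=\Psi_P$, $\mathcal{F}(Q)=\Psi_Q$, $\Psi_Q\otimes\Psi\triangleright P\xrightarrow{\overline{M}N}P'$,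 $\Psi_P\otimes\Psi\triangleright Q\xrightarrow{\underline{K}N}Q'$ and $\Psi_Q\otimes\Psi_P\otimes\Psi\vdash M\leftrightarrow K$, then $\Psi\triangleright P\mid Q\xrightarrow{\tau}P'\mid Q'$, and symmetrically. Assertion processes and $\mathbf{0}$ have no transitions. Set-expressions in terms are identified with their values after substitution. Translation: $\textsc{dcrpsi}(\mathcal{D})=P_s\mid\big|_{e\in E}P_e$ with $P_s=(\!|(Ex',Re',In',0)|\!)\mid\overline{m}\langle(Ex',Re',In',0)\rangle.\mathbf{0}$ and $P_e=!\big(\mathbf{case}\ \varphi_e:\underline{m}(\lambda X_E,X_R,X_I,X_G)(X_E,X_R,X_I,X_G).(\overline{m}\langle U_e\rangle.\mathbf{0}\mid(\!|U_e|\!))\big)$, where $U_e=(X_E\cup\{e\},(X_R\setminus\{e\})\cup e\!\bullet\!\!\to,(X_I\setminus e\!\to\!\%)\cup e\!\to\!+,s(X_G))$ and $\varphi_e=(\to\!\bullet e,\to\!\diamond e,e)$. *)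

theory Defs
  imports Main
begin

text \<open>Assertions (Ea, Ra, Ia, G); the generation G is a natural number (0 and Suc = s).\<close>
type_synonym 'e assn = "'e set \<times> 'e set \<times> 'e set \<times> nat"

type_synonym 'e cnd = "'e set \<times> 'e set \<times> 'e"

text \<open>Terms: the distinguished channel name m, and assertions.\<close>
datatype 'e trm = Chan | ATrm "'e assn"

definition unit_assn :: "'e assn" where
  "unit_assn = ({}, {}, {}, 0)"

fun gen :: "'e assn \<Rightarrow> nat" where
  "gen (Ea, Ra, Ia, G) = G"

fun comp_assn :: "'e assn \<Rightarrow> 'e assn \<Rightarrow> 'e assn" where
  "comp_assn (Ea, Ra, Ia, G) (Eb, Rb, Ib, G2) =
     (if G > G2 then (Ea, Ra, Ia, G)
      else if G < G2 then (Eb, Rb, Ib, G2)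
      else (Ea \<union> Eb, Ra \<union> Rb, Ia \<union> Ib, G))"

fun entails :: "'e assn \<Rightarrow> 'e cnd \<Rightarrow> bool" where
  "entails (Ea, Ra, Ia, G) (Co, Mi, e) \<longleftrightarrow>
     e \<in> Ia \<and> Ia \<inter> Co \<subseteq> Ea \<and> Ia \<inter> Mi \<inter> Ra = {}"

definition chan_eq :: "'e assn \<Rightarrow> 'e trm \<Rightarrow> 'e trm \<Rightarrow> bool" where
  "chan_eq \<Psi> M K \<longleftrightarrow> M = K"

text \<open>Input prefixes bind the four variables X_E, X_R, X_I, X_G; the binding is
 represented in higher-order abstract syntax: the pattern and the continuation
 are functions of the substituted values (so set expressions are identified
 with their values after substitution).\<close>
datatype 'e proc =
    PNil
  | PAss "'e assn"
  | POut "'e trm" "'e trm" "'e proc"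
  | PInp "'e trm" "'e assn \<Rightarrow> 'e trm" "'e assn \<Rightarrow> 'e proc"
  | PCase "('e cnd \<times> 'e proc) list"
  | PPar "'e proc" "'e proc"
  | PRep "'e proc"

fun frame :: "'e proc \<Rightarrow> 'e assn" where
  "frame (PAss \<Psi>) = \<Psi>"
| "frame (PPar P Q) = comp_assn (frame P) (frame Q)"
| "frame _ = unit_assn"

datatype 'e label = LOut "'e trm" "'e trm" | LIn "'e trm" "'e trm" | LTau

inductive trans :: "'e assn \<Rightarrow> 'e proc \<Rightarrow> 'e label \<Rightarrow> 'e proc \<Rightarrow> bool" where
  Out: "chan_eq \<Psi> M K \<Longrightarrow> trans \<Psi> (POut M N P) (LOut K N) P"
| Ia: "chan_eq \<Psi> M K \<Longrightarrow> trans \<Psi> (PInp M N P) (LIn K (N L)) (P L)"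
| Case: "i < length cs \<Longrightarrow> trans \<Psi> (snd (cs ! i)) \<alpha> P' \<Longrightarrow> entails \<Psi> (fst (cs ! i))
         \<Longrightarrow> trans \<Psi> (PCase cs) \<alpha> P'"
| ParL: "trans (comp_assn \<Psi> (frame Q)) P \<alpha> P' \<Longrightarrow> trans \<Psi> (PPar P Q) \<alpha> (PPar P' Q)"
| ParR: "trans (comp_assn \<Psi> (frame P)) Q \<alpha> Q' \<Longrightarrow> trans \<Psi> (PPar P Q) \<alpha> (PPar P Q')"
| Rep: "trans \<Psi> (PPar P (PRep P)) \<alpha> P' \<Longrightarrow> trans \<Psi> (PRep P) \<alpha> P'"
| ComL: "trans (comp_assn (frame Q) \<Psi>) P (LOut M N) P' \<Longrightarrow>
         trans (comp_assn (frame P) \<Psi>) Q (LIn K N) Q' \<Longrightarrow>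
         chan_eq (comp_assn (comp_assn (frame Q) (frame P)) \<Psi>) M K \<Longrightarrow>
         trans \<Psi> (PPar P Q) LTau (PPar P' Q')"
| ComR: "trans (comp_assn (frame Q) \<Psi>) P (LIn K N) P' \<Longrightarrow>
         trans (comp_assn (frame P) \<Psi>) Q (LOut M N) Q' \<Longrightarrow>
         chan_eq (comp_assn (comp_assn (frame Q) (frame P)) \<Psi>) M K \<Longrightarrow>
         trans \<Psi> (PPar P Q) LTau (PPar P' Q')"

record 'e dcr =
  events :: "'e set"
  mEx :: "'e set"
  mRe :: "'e set"
  mIn :: "'e set"
  rcond :: "('e \<times> 'e) set"
  rresp :: "('e \<times> 'e) set"
  rmile :: "('e \<times> 'e) set"
  rincl :: "('e \<times> 'e) set"
  rexcl :: "('e \<times> 'e) set"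

definition wf_dcr :: "'e dcr \<Rightarrow> bool" where
  "wf_dcr D \<longleftrightarrow> mEx D \<subseteq> events D \<and> mRe D \<subseteq> events D \<and> mIn D \<subseteq> events D
     \<and> rcond D \<subseteq> events D \<times> events D \<and> rresp D \<subseteq> events D \<times> events D
     \<and> rmile D \<subseteq> events D \<times> events D \<and> rincl D \<subseteq> events D \<times> events D
     \<and> rexcl D \<subseteq> events D \<times> events D"

fun U_e :: "'e dcr \<Rightarrow> 'e \<Rightarrow> 'e assn \<Rightarrow> 'e assn" where
  "U_e D e (XE, XR, XI, XG) =
     (XE \<union> {e},
      (XR - {e}) \<union> {f. (e, f) \<in> rresp D},
      (XI - {f. (e, f) \<in> rexcl D}) \<union> {f. (e, f) \<in> rincl D},
      Suc XG)"

definition phi_e :: "'e dcr \<Rightarrow> 'e \<Rightarrow> 'e cnd" where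
  "phi_e D e = ({f. (f, e) \<in> rcond D}, {f. (f, e) \<in> rmile D}, e)"

definition P_e :: "'e dcr \<Rightarrow> 'e \<Rightarrow> 'e proc" where
  "P_e D e = PRep (PCase [(phi_e D e,
      PInp Chan (\<lambda>X. ATrm X)
        (\<lambda>X. PPar (POut Chan (ATrm (U_e D e X)) PNil) (PAss (U_e D e X))))])"

definition P_s :: "'e dcr \<Rightarrow> 'e proc" where
  "P_s D = PPar (PAss (mEx D, mRe D, mIn D, 0))
                (POut Chan (ATrm (mEx D, mRe D, mIn D, 0)) PNil)"

fun big_par :: "'e proc list \<Rightarrow> 'e proc" where
  "big_par [] = PNil"
| "big_par [P] = P"
| "big_par (P # Ps) = PPar P (big_par Ps)"

text \<open>The translation, relative to an enumeration es of the events.\<close>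
definition dcrpsi :: "'e dcr \<Rightarrow> 'e list \<Rightarrow> 'e proc" where
  "dcrpsi D es = PPar (P_s D) (big_par (map (P_e D) es))"

end

theory Submission
  imports Defs "HOL-Library.Multiset"
begin

definition gf :: "'e proc \<Rightarrow> nat" where "gf P = gen (frame P)"

lemma gen_comp: "gen (comp_assn a b) = max (gen a) (gen b)"
  by (cases a; cases b) auto

lemma gf_simps[simp]: "gf (PPar P Q) = max (gf P) (gf Q)" "gf PNil = 0" "gf (PAss a) = gen a"
  "gf (POut M N P) = 0" "gf (PInp M Nf Pf) = 0" "gf (PCase cs) = 0" "gf (PRep P) = 0"
  by (auto simp: gf_def gen_comp unit_assn_def)

fun outs :: "'e proc \<Rightarrow> nat multiset" where
  "outs (POut M (ATrm a) P) = {#gen a#}"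
| "outs (PPar P Q) = outs P + outs Q"
| "outs _ = {#}"

definition templ :: "('e cnd \<times> 'e proc) list \<Rightarrow> bool" where
  "templ cs \<longleftrightarrow> (\<exists>\<phi> M f. cs = [(\<phi>, PInp M (\<lambda>X. ATrm X)
        (\<lambda>X. PPar (POut Chan (ATrm (f X)) PNil) (PAss (f X))))] \<and> (\<forall>X. gen (f X) = Suc (gen X)))"

fun good :: "'e proc \<Rightarrow> bool" where
  "good PNil = True"
| "good (PAss a) = True"
| "good (POut M N P) = ((\<exists>a. N = ATrm a) \<and> P = PNil)"
| "good (PPar P Q) = (good P \<and> good Q)"
| "good (PCase cs) = templ cs"
| "good (PRep P) = (good P \<and> (\<exists>cs. P = PCase cs))"
| "good (PInp M Nf Pf) = False"

lemma inp_inv: "trans \<Psi> (PInp M Nf Pf) \<alpha> P' \<Longrightarrow> \<exists>K L. \<alpha> = LIn K (Nf L) \<and> P' = Pf L"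
  by (erule trans.cases) auto

lemma L_out: "trans \<Psi> P \<alpha> P' \<Longrightarrow> good P \<Longrightarrow> \<alpha> = LOut M N \<Longrightarrow>
  \<exists>a. N = ATrm a \<and> gen a \<in># outs P \<and> outs P' = outs P - {#gen a#} \<and> gf P' = gf P \<and> good P'"
proof (induction arbitrary: M N rule: trans.induct)
  case (Case i cs \<Psi> \<alpha> P')
  then obtain \<phi> M f where cs: "cs = [(\<phi>, PInp M (\<lambda>X. ATrm X)
        (\<lambda>X. PPar (POut Chan (ATrm (f X)) PNil) (PAss (f X))))]" by (auto simp: templ_def)
  with Case show ?case by (auto dest!: inp_inv)
next
  case (ParL \<Psi> Q P \<alpha> P')
  then show ?case by auto
next
  case (ParR \<Psi> P Q \<alpha> Q')
  then show ?case by auto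
next
  case (Rep \<Psi> P \<alpha> P')
  then show ?case by fastforce
qed auto

lemma L_in: "trans \<Psi> P \<alpha> P' \<Longrightarrow> good P \<Longrightarrow> \<alpha> = LIn K N \<Longrightarrow>
  \<exists>a. N = ATrm a \<and> outs P' = outs P + {#Suc (gen a)#} \<and> gf P' = max (gf P) (Suc (gen a)) \<and> good P'"
proof (induction arbitrary: K N rule: trans.induct)
  case (Case i cs \<Psi> \<alpha> P')
  then obtain \<phi> M f where cs: "cs = [(\<phi>, PInp M (\<lambda>X. ATrm X)
        (\<lambda>X. PPar (POut Chan (ATrm (f X)) PNil) (PAss (f X))))]" and f: "\<forall>X. gen (f X) = Suc (gen X)"
    by (auto simp: templ_def)
  from Case(1,2) cs have "trans \<Psi> (PInp M (\<lambda>X. ATrm X)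
        (\<lambda>X. PPar (POut Chan (ATrm (f X)) PNil) (PAss (f X)))) \<alpha> P'" by simp
  from inp_inv[OF this] obtain K' L where "\<alpha> = LIn K' (ATrm L)"
     "P' = PPar (POut Chan (ATrm (f L)) PNil) (PAss (f L))" by auto
  moreover have "gen (f L) = Suc (gen L)" using f by blast
  ultimately show ?case using Case.prems(2) cs
    by (intro exI[of _ L]) (simp del: split_paired_Ex add: exI[of _ "f L"])
next
  case (ParL \<Psi> Q P \<alpha> P')
  then show ?case by (fastforce simp: max.assoc max.commute max.left_commute)
next
  case (ParR \<Psi> P Q \<alpha> Q')
  then show ?case by (fastforce simp: max.assoc max.commute max.left_commute)
next
  case (Rep \<Psi> P \<alpha> P')
  then show ?case by fastforce
qed auto

lemma L_tau: "trans \<Psi> P \<alpha> P' \<Longrightarrow> good P \<Longrightarrow> \<alpha> = LTau \<Longrightarrow>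
  \<exists>g. g \<in># outs P \<and> outs P' = outs P - {#g#} + {#Suc g#} \<and> gf P' = max (gf P) (Suc g) \<and> good P'"
proof (induction rule: trans.induct)
  case (Case i cs \<Psi> \<alpha> P')
  then obtain \<phi> M f where cs: "cs = [(\<phi>, PInp M (\<lambda>X. ATrm X)
        (\<lambda>X. PPar (POut Chan (ATrm (f X)) PNil) (PAss (f X))))]"
    by (auto simp: templ_def)
  with Case show ?case by (auto dest!: inp_inv)
next
  case (ParL \<Psi> Q P \<alpha> P')
  then obtain g where "g \<in># outs P" "outs P' = outs P - {#g#} + {#Suc g#}"
     "gf P' = max (gf P) (Suc g)" "good P'" by auto
  with ParL show ?case
    by (intro exI[of _ g]) (auto simp: max.assoc max.commute max.left_commute)
next
  case (ParR \<Psi> P Q \<alpha> Q')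
  then obtain g where "g \<in># outs Q" "outs Q' = outs Q - {#g#} + {#Suc g#}"
     "gf Q' = max (gf Q) (Suc g)" "good Q'" by auto
  with ParR show ?case
    by (intro exI[of _ g]) (auto simp: max.assoc max.commute max.left_commute)
next
  case (Rep \<Psi> P \<alpha> P')
  then show ?case by fastforce
next
  case (ComL Q \<Psi> P M N P' K Q')
  from L_out[OF ComL(1)] ComL obtain a where a: "N = ATrm a" "gen a \<in># outs P"
    "outs P' = outs P - {#gen a#}" "gf P' = gf P" "good P'" by auto
  from L_in[OF ComL(2)] ComL a obtain b where b: "N = ATrm b"
    "outs Q' = outs Q + {#Suc (gen b)#}" "gf Q' = max (gf Q) (Suc (gen b))" "good Q'" by auto
  from a b have ab: "a = b" by simp
  show ?case using a b ab
    by (intro exI[of _ "gen a"]) (auto simp: max.assoc max.commute max.left_commute)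
next
  case (ComR Q \<Psi> P K N P' M Q')
  from L_in[OF ComR(1)] ComR obtain b where b: "N = ATrm b"
    "outs P' = outs P + {#Suc (gen b)#}" "gf P' = max (gf P) (Suc (gen b))" "good P'" by auto
  from L_out[OF ComR(2)] ComR obtain a where a: "N = ATrm a" "gen a \<in># outs Q"
    "outs Q' = outs Q - {#gen a#}" "gf Q' = gf Q" "good Q'" by auto
  from a b have ab: "a = b" by simp
  show ?case using a b ab
    by (intro exI[of _ "gen a"]) (auto simp: max.assoc max.commute max.left_commute)
qed auto

lemma big_par_good: "\<forall>P\<in>set Ps. good P \<and> outs P = {#} \<and> gf P = 0 \<Longrightarrow>
   good (big_par Ps) \<and> outs (big_par Ps) = {#} \<and> gf (big_par Ps) = 0"
  by (induction Ps rule: big_par.induct) auto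

lemma P_e_good: "good (P_e D e) \<and> outs (P_e D e) = {#} \<and> gf (P_e D e) = 0"
proof -
  have g: "\<forall>X. gen (U_e D e X) = Suc (gen X)"
  proof
    fix X :: "'a assn" show "gen (U_e D e X) = Suc (gen X)" by (cases X) auto
  qed
  have "templ [(phi_e D e, PInp Chan (\<lambda>X. ATrm X)
        (\<lambda>X. PPar (POut Chan (ATrm (U_e D e X)) PNil) (PAss (U_e D e X))))]"
    unfolding templ_def using g by blast
  then show ?thesis unfolding P_e_def by simp
qed

theorem mainTheorem8:
  fixes D :: "'e dcr" and es :: "'e list" and Ps :: "'e proc list" and n :: nat
  assumes "wf_dcr D"
    and "set es = events D" and "distinct es"
    and "length Ps = Suc n"
    and "Ps ! 0 = dcrpsi D es"
    and "\<forall>i < n. trans unit_assn (Ps ! i) LTau (Ps ! Suc i)"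
  shows "gen (frame (Ps ! n)) = n"
proof -
  have "\<forall>i\<le>n. good (Ps ! i) \<and> outs (Ps ! i) = {#i#} \<and> gf (Ps ! i) = i"
  proof (intro allI impI)
    fix i assume "i \<le> n"
    then show "good (Ps ! i) \<and> outs (Ps ! i) = {#i#} \<and> gf (Ps ! i) = i"
    proof (induction i)
      case 0
      have "good (big_par (map (P_e D) es)) \<and> outs (big_par (map (P_e D) es)) = {#}
         \<and> gf (big_par (map (P_e D) es)) = 0"
        by (rule big_par_good) (auto simp: P_e_good)
      then show ?case using assms(5) by (simp add: dcrpsi_def P_s_def)
    next
      case (Suc i)
      then have IH: "good (Ps ! i)" "outs (Ps ! i) = {#i#}" "gf (Ps ! i) = i" by auto
      from Suc.prems assms(6) have "trans unit_assn (Ps ! i) LTau (Ps ! Suc i)" by auto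
      from L_tau[OF this IH(1)] IH show ?case by auto
    qed
  qed
  then show ?thesis by (auto simp: gf_def)
qed

end
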